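(* Let $\mathfrak{n}$ be a $2$-step nilpotent real Lie algebra with center $\mathfrak{z}$ and commutator $\mathfrak{n}'$, and let $J$ be a linear map with $J^2=-I$ and $J\mathfrak{n}'\subset\mathfrak{z}$. Let $\langle\cdot,\cdot\rangle$ be a $J$-compatible inner product, $\mathfrak{z}_0=\mathfrak{n}'+J\mathfrak{n}'$, $\mathfrak{v}=\mathfrak{z}_0^{\perp}$, $J_{\mathfrak{v}}=J|_{\mathfrak{v}}$, $\dim\mathfrak{v}=2n$, and $j:\mathfrak{z}_0\to\mathfrak{so}(\mathfrak{v})$ defined by $\langle j(z)v,w\rangle=\langle z,[v,w]\rangle$. Put $\mathfrak{n}'_J=\mathfrak{n}'\cap J\mathfrak{n}'$, let $\mathfrak{z}_1$ be the orthogonal complement of $\mathfrak{n}'_J$ in $\mathfrak{n}'$ (so that $J\mathfrak{z}_1\perp\mathfrak{n}'$), and let $\mathfrak{b}\subset\mathfrak{n}'_J$ be any subspace with orthogonal decomposition $\mathfrak{n}'_J=\mathfrak{b}\oplus J\mathfrak{b}$. The following are equivalent: (i) $J$ is integrable; (ii) $j(z)\in\mathfrak{u}(n)$ for all $z\in\mathfrak{z}_1$, and $j(Jz)-\tfrac12[J_{\mathfrak{v}},j(z)]\in\mathfrak{u}(n)$ for all $z\in\mathfrak{b}$; (iii) $j(z)\in\mathfrak{u}(n)$ for all $z\in\mathfrak{z}_1$, and $j(Jz)_-=\tfrac12[J_{\mathfrak{v}},j(z)]$ for all $z\in\mathfrak{b}$.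
   Context: $J$ integrable means $N_J(x,y)=[x,y]+J([Jx,y]+[x,Jy])-[Jx,Jy]=0$ for all $x,y$. $\mathfrak{u}(n)=\{T\in\mathfrak{so}(\mathfrak{v}): T J_{\mathfrak{v}}=J_{\mathfrak{v}}T\}$. For $T\in\operatorname{End}(\mathfrak{v})$, $T_{\pm}=\tfrac12(T\mp J_{\mathfrak{v}}TJ_{\mathfrak{v}})$, so $T=T_++T_-$ with $T_+$ commuting and $T_-$ anticommuting with $J_{\mathfrak{v}}$. $[A,B]=AB-BA$. A Lie algebra $\mathfrak{n}$ is $2$-step nilpotent if it is non-abelian and $\mathfrak{n}'\subset\mathfrak{z}$. *)

theory Defs
  imports "HOL-Analysis.Analysis"
begin

text \<open>The underlying space is a finite-dimensional real inner product space
  (type class euclidean_space); its inner product plays the role of the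
  J-compatible inner product.\<close>

definition lie_algebra :: "('a::real_vector \<Rightarrow> 'a \<Rightarrow> 'a) \<Rightarrow> bool" where
  "lie_algebra br \<longleftrightarrow> bilinear br \<and> (\<forall>x. br x x = 0) \<and>
     (\<forall>x y z. br x (br y z) + br y (br z x) + br z (br x y) = 0)"

definition center :: "('a::real_vector \<Rightarrow> 'a \<Rightarrow> 'a) \<Rightarrow> 'a set" where
  "center br = {x. \<forall>y. br x y = 0}"

definition derived :: "('a::real_vector \<Rightarrow> 'a \<Rightarrow> 'a) \<Rightarrow> 'a set" where
  "derived br = span {br x y | x y. True}"

definition two_step_nilpotent :: "('a::real_vector \<Rightarrow> 'a \<Rightarrow> 'a) \<Rightarrow> bool" where
  "two_step_nilpotent br \<longleftrightarrow> lie_algebra br \<and> (\<exists>x y. br x y \<noteq> 0) \<and>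
     derived br \<subseteq> center br"

definition integrable :: "('a::real_vector \<Rightarrow> 'a \<Rightarrow> 'a) \<Rightarrow> ('a \<Rightarrow> 'a) \<Rightarrow> bool" where
  "integrable br J \<longleftrightarrow>
     (\<forall>x y. br x y + J (br (J x) y + br x (J y)) - br (J x) (J y) = 0)"

definition zz0 :: "('a::real_vector \<Rightarrow> 'a \<Rightarrow> 'a) \<Rightarrow> ('a \<Rightarrow> 'a) \<Rightarrow> 'a set" where
  "zz0 br J = {a + J b | a b. a \<in> derived br \<and> b \<in> derived br}"

definition vv :: "('a::real_inner \<Rightarrow> 'a \<Rightarrow> 'a) \<Rightarrow> ('a \<Rightarrow> 'a) \<Rightarrow> 'a set" where
  "vv br J = {x. \<forall>z \<in> zz0 br J. inner x z = 0}"

definition jmap :: "('a::real_inner \<Rightarrow> 'a \<Rightarrow> 'a) \<Rightarrow> ('a \<Rightarrow> 'a) \<Rightarrow> 'a \<Rightarrow> 'a \<Rightarrow> 'a" where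
  "jmap br J z x = (THE u. u \<in> vv br J \<and> (\<forall>w \<in> vv br J. inner u w = inner z (br x w)))"

definition nJ :: "('a::real_vector \<Rightarrow> 'a \<Rightarrow> 'a) \<Rightarrow> ('a \<Rightarrow> 'a) \<Rightarrow> 'a set" where
  "nJ br J = derived br \<inter> J ` derived br"

definition zz1 :: "('a::real_inner \<Rightarrow> 'a \<Rightarrow> 'a) \<Rightarrow> ('a \<Rightarrow> 'a) \<Rightarrow> 'a set" where
  "zz1 br J = {x \<in> derived br. \<forall>y \<in> nJ br J. inner x y = 0}"

text \<open>T (an endomorphism of the subspace V, represented by a function on the
  whole space) lies in u(n): it maps V to V, is skew-symmetric on V and
  commutes with J on V.\<close>
definition in_u :: "'a::real_inner set \<Rightarrow> ('a \<Rightarrow> 'a) \<Rightarrow> ('a \<Rightarrow> 'a) \<Rightarrow> bool" where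
  "in_u V J T \<longleftrightarrow> (\<forall>x\<in>V. T x \<in> V) \<and>
     (\<forall>x\<in>V. \<forall>y\<in>V. inner (T x) y = - inner x (T y)) \<and>
     (\<forall>x\<in>V. T (J x) = J (T x))"

definition opcomm :: "('a::real_vector \<Rightarrow> 'a) \<Rightarrow> ('a \<Rightarrow> 'a) \<Rightarrow> 'a \<Rightarrow> 'a" where
  "opcomm A B = (\<lambda>x. A (B x) - B (A x))"

definition minus_part :: "('a::real_vector \<Rightarrow> 'a) \<Rightarrow> ('a \<Rightarrow> 'a) \<Rightarrow> 'a \<Rightarrow> 'a" where
  "minus_part J T = (\<lambda>x. (1/2) *\<^sub>R (T x + J (T (J x))))"

end

theory Submission imports Defs begin

definition prj :: "'a::euclidean_space set \<Rightarrow> 'a \<Rightarrow> 'a" where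
  "prj S u = (SOME p. p \<in> S \<and> (\<forall>d\<in>S. inner (u - p) d = 0))"

lemma prj_ex: fixes S :: "'a::euclidean_space set" assumes "subspace S" shows "\<exists>p. p \<in> S \<and> (\<forall>d\<in>S. inner (u - p) d = 0)"
proof -
  obtain y r where y: "y \<in> span S" "\<And>w. w \<in> span S \<Longrightarrow> orthogonal r w" "u = y + r"
    using orthogonal_subspace_decomp_exists by blast
  have "y \<in> S" using y(1) assms by (metis span_eq_iff)
  moreover have "\<forall>d\<in>S. inner (u - y) d = 0"
  proof
    fix d assume "d \<in> S"
    then have "orthogonal r d" using y(2) span_base by blast
    moreover have "u - y = r" using y(3) by simp
    ultimately show "inner (u - y) d = 0" by (simp add: orthogonal_def)
  qed
  ultimately show ?thesis by blast
qed

lemma prj: assumes "subspace S" shows "prj S u \<in> S" "\<And>d. d \<in> S \<Longrightarrow> inner (u - prj S u) d = 0"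
  using someI_ex[OF prj_ex[OF assms, of u]] unfolding prj_def by auto

lemma prj_unique: assumes "subspace S" "p \<in> S" "\<forall>d\<in>S. inner (u - p) d = 0" shows "prj S u = p"
proof -
  have d: "prj S u - p \<in> S" using prj(1)[OF assms(1)] assms(2) subspace_diff[OF assms(1)] by blast
  have "inner (prj S u - p) (prj S u - p) = inner (u - p) (prj S u - p) - inner (u - prj S u) (prj S u - p)"
    by (simp add: inner_diff_left)
  also have "\<dots> = 0" using assms(3) d prj(2)[OF assms(1) d] by simp
  finally show ?thesis by simp
qed

lemma prj_linear: assumes "subspace S" shows "linear (prj S)"
proof (rule linearI)
  fix x y
  show "prj S (x + y) = prj S x + prj S y"
  proof (rule prj_unique[OF assms])
    show "prj S x + prj S y \<in> S" using prj[OF assms] subspace_add[OF assms] by blast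
    show "\<forall>d\<in>S. inner (x + y - (prj S x + prj S y)) d = 0"
    proof
      fix d assume "d \<in> S"
      then have "inner (x - prj S x) d = 0" "inner (y - prj S y) d = 0" using prj(2)[OF assms] by auto
      moreover have eq: "x + y - (prj S x + prj S y) = (x - prj S x) + (y - prj S y)" by simp
      ultimately show "inner (x + y - (prj S x + prj S y)) d = 0" by (metis eq inner_add_left add_0)
    qed
  qed
next
  fix c x
  show "prj S (c *\<^sub>R x) = c *\<^sub>R prj S x"
  proof (rule prj_unique[OF assms])
    show "c *\<^sub>R prj S x \<in> S" using prj[OF assms] subspace_scale[OF assms] by blast
    show "\<forall>d\<in>S. inner (c *\<^sub>R x - c *\<^sub>R prj S x) d = 0"
      using prj(2)[OF assms] by (metis inner_scaleR_left mult_zero_right scaleR_diff_right)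
  qed
qed

locale nilctx =
  fixes br :: "'a::euclidean_space \<Rightarrow> 'a \<Rightarrow> 'a" and J :: "'a \<Rightarrow> 'a" and b :: "'a set"
  assumes nil: "two_step_nilpotent br"
    and linJ: "linear J" and JJ: "\<forall>x. J (J x) = - x"
    and Jder: "J ` derived br \<subseteq> center br"
    and Jin: "\<forall>x y. inner (J x) (J y) = inner x y"
    and sb: "subspace b" and bsub: "b \<subseteq> nJ br J"
    and nJeq: "nJ br J = {u + J w | u w. u \<in> b \<and> w \<in> b}"
    and borth: "\<forall>u\<in>b. \<forall>w\<in>b. inner u (J w) = 0"
begin

abbreviation "D \<equiv> derived br"
abbreviation "Z0 \<equiv> zz0 br J"
abbreviation "V \<equiv> vv br J"
abbreviation "NJ \<equiv> nJ br J"
abbreviation "Z1 \<equiv> zz1 br J"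
abbreviation "jm \<equiv> jmap br J"

lemma bil: "bilinear br" using nil unfolding two_step_nilpotent_def lie_algebra_def by auto

lemma br_addL[simp]: "br (x + y) z = br x z + br y z" by (rule bilinear_ladd[OF bil])
lemma br_addR[simp]: "br x (y + z) = br x y + br x z" by (rule bilinear_radd[OF bil])
lemma br_negL[simp]: "br (- x) z = - br x z" by (rule bilinear_lneg[OF bil])
lemma br_negR[simp]: "br x (- z) = - br x z" by (rule bilinear_rneg[OF bil])
lemma br_subL[simp]: "br (x - y) z = br x z - br y z" by (rule bilinear_lsub[OF bil])
lemma br_subR[simp]: "br x (y - z) = br x y - br x z" by (rule bilinear_rsub[OF bil])
lemma br_scL[simp]: "br (c *\<^sub>R x) z = c *\<^sub>R br x z" by (rule bilinear_lmul[OF bil])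
lemma br_scR[simp]: "br x (c *\<^sub>R z) = c *\<^sub>R br x z" by (rule bilinear_rmul[OF bil])
lemma br_0L[simp]: "br 0 z = 0" by (rule bilinear_lzero[OF bil])
lemma br_0R[simp]: "br z 0 = 0" by (rule bilinear_rzero[OF bil])

lemma br_skew: "br x y = - br y x"
proof -
  have a: "\<forall>x. br x x = 0" using nil unfolding two_step_nilpotent_def lie_algebra_def by auto
  have "br (x + y) (x + y) = 0" using a by blast
  then have "br x x + br x y + (br y x + br y y) = 0" by (simp add: algebra_simps)
  then have "br x y + br y x = 0" using a by simp
  then show ?thesis by (simp add: eq_neg_iff_add_eq_0)
qed

lemma J_add[simp]: "J (x + y) = J x + J y" using linJ by (simp add: linear_add)
lemma J_neg[simp]: "J (- x) = - J x" using linJ by (simp add: linear_neg)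
lemma J_sub[simp]: "J (x - y) = J x - J y" using linJ by (simp add: linear_diff)
lemma J_sc[simp]: "J (c *\<^sub>R x) = c *\<^sub>R J x" using linJ by (simp add: linear_scale)
lemma J_0[simp]: "J 0 = 0" using linJ by (simp add: linear_0)
lemma JJ'[simp]: "J (J x) = - x" using JJ by blast
lemma Jin'[simp]: "inner (J x) (J y) = inner x y" using Jin by blast
lemma J_inner: "inner (J x) y = - inner x (J y)"
  using Jin'[of "J x" y] by simp

lemma subD: "subspace D" unfolding derived_def by (rule subspace_span)
lemma brD: "br x y \<in> D" unfolding derived_def by (rule span_base) auto
lemma D_center: "D \<subseteq> center br" using nil unfolding two_step_nilpotent_def by auto

lemma centerL: "c \<in> center br \<Longrightarrow> br c y = 0" unfolding center_def by auto
lemma centerR: "c \<in> center br \<Longrightarrow> br y c = 0" using centerL br_skew by (metis neg_equal_0_iff_equal)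

lemma subZ0: "subspace Z0"
  unfolding subspace_def zz0_def
proof (intro conjI allI ballI impI)
  show "0 \<in> {a + J b |a b. a \<in> D \<and> b \<in> D}" using subD subspace_0 by force
next
  fix x y assume "x \<in> {a + J b |a b. a \<in> D \<and> b \<in> D}" "y \<in> {a + J b |a b. a \<in> D \<and> b \<in> D}"
  then obtain a1 b1 a2 b2 where "x = a1 + J b1" "y = a2 + J b2" "a1 \<in> D" "b1 \<in> D" "a2 \<in> D" "b2 \<in> D" by auto
  then show "x + y \<in> {a + J b |a b. a \<in> D \<and> b \<in> D}"
    by (intro CollectI exI[of _ "a1+a2"] exI[of _ "b1+b2"]) (auto simp: subspace_add[OF subD])
next
  fix c x assume "x \<in> {a + J b |a b. a \<in> D \<and> b \<in> D}"
  then obtain a1 b1 where "x = a1 + J b1" "a1 \<in> D" "b1 \<in> D" by auto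
  then show "c *\<^sub>R x \<in> {a + J b |a b. a \<in> D \<and> b \<in> D}"
    by (intro CollectI exI[of _ "c *\<^sub>R a1"] exI[of _ "c *\<^sub>R b1"]) (auto simp: subspace_scale[OF subD] scaleR_add_right)
qed

lemma D_Z0: "d \<in> D \<Longrightarrow> d \<in> Z0" unfolding zz0_def using subspace_0[OF subD] by force
lemma JD_Z0: "d \<in> D \<Longrightarrow> J d \<in> Z0" unfolding zz0_def using subspace_0[OF subD] by force
lemma J_Z0: "x \<in> Z0 \<Longrightarrow> J x \<in> Z0"
proof -
  assume "x \<in> Z0"
  then obtain a c where "x = a + J c" "a \<in> D" "c \<in> D" unfolding zz0_def by auto
  then have "J x = (- c) + J a" by simp
  then show ?thesis unfolding zz0_def using \<open>a \<in> D\<close> \<open>c \<in> D\<close> subspace_neg[OF subD] by blast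
qed
lemma Z0_center: "x \<in> Z0 \<Longrightarrow> x \<in> center br"
proof -
  assume "x \<in> Z0"
  then obtain a c where "x = a + J c" "a \<in> D" "c \<in> D" unfolding zz0_def by auto
  then have "a \<in> center br" "J c \<in> center br" using D_center Jder by auto
  then show ?thesis using \<open>x = a + J c\<close> unfolding center_def by auto
qed
lemma Z0L[simp]: "x \<in> Z0 \<Longrightarrow> br x y = 0" using Z0_center centerL by blast
lemma Z0R[simp]: "x \<in> Z0 \<Longrightarrow> br y x = 0" using Z0_center centerR by blast

lemma decomp: obtains y where "y \<in> Z0" "x - y \<in> V"
proof -
  obtain y r where y: "y \<in> span Z0" "\<And>w. w \<in> span Z0 \<Longrightarrow> orthogonal r w" "x = y + r"
    using orthogonal_subspace_decomp_exists by blast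
  have "y \<in> Z0" using y(1) by (metis span_eq_iff subZ0)
  moreover have "x - y \<in> V" unfolding vv_def using y(2,3) span_base[of _ Z0] by (auto simp: orthogonal_def inner_commute)
  ultimately show ?thesis using that by blast
qed

lemma subV: "subspace V" unfolding subspace_def vv_def by (auto simp: inner_add_left)
lemma J_V: "x \<in> V \<Longrightarrow> J x \<in> V" unfolding vv_def using J_Z0 J_inner by auto

lemma jm_ex: "\<exists>!u. u \<in> V \<and> (\<forall>w \<in> V. inner u w = inner z (br x w))"
proof -
  have lin: "linear (br x)" using bil unfolding bilinear_def by auto
  define a where "a = adjoint (br x) z"
  have a: "inner a w = inner z (br x w)" for w
    using adjoint_works[OF lin, of w z] unfolding a_def by (simp add: inner_commute)
  obtain y where y: "y \<in> Z0" "a - y \<in> V" using decomp by blast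
  have ex: "a - y \<in> V \<and> (\<forall>w \<in> V. inner (a - y) w = inner z (br x w))"
    using y a unfolding vv_def by (auto simp: inner_diff_left inner_diff_right inner_commute)
  show ?thesis
  proof (rule ex1I[of _ "a - y"])
    show "a - y \<in> V \<and> (\<forall>w \<in> V. inner (a - y) w = inner z (br x w))" by (rule ex)
  next
    fix u assume u: "u \<in> V \<and> (\<forall>w \<in> V. inner u w = inner z (br x w))"
    have d: "u - (a - y) \<in> V" using u ex subspace_diff[OF subV] by blast
    have "inner (u - (a - y)) (u - (a - y)) = 0"
      using u ex d by (simp add: inner_diff_left)
    then show "u = a - y" by simp
  qed
qed

lemma jm_V: "jm z x \<in> V" and jm_inV: "w \<in> V \<Longrightarrow> inner (jm z x) w = inner z (br x w)"
  using theI'[OF jm_ex[of z x]] unfolding jmap_def by auto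

lemma jm_inner: "inner (jm z x) w = inner z (br x w)"
proof -
  obtain y where y: "y \<in> Z0" "w - y \<in> V" using decomp by blast
  have "inner (jm z x) w = inner (jm z x) y + inner (jm z x) (w - y)" by (simp add: inner_diff_right)
  also have "inner (jm z x) y = 0" using jm_V y(1) unfolding vv_def by auto
  also have "inner (jm z x) (w - y) = inner z (br x w)" using jm_inV[OF y(2)] y(1) by simp
  finally show ?thesis by simp
qed

lemma vec_eqI: "(\<And>w. inner a w = inner c w) \<Longrightarrow> a = c"
  by (metis inner_diff_left inner_eq_zero_iff right_minus_eq)

definition AA where "AA z x w = inner z (br (J x) w) + inner z (br x (J w))"
definition CC where "CC z x w = inner z (br x w) - inner z (br (J x) (J w))
   - inner (J z) (br (J x) w) - inner (J z) (br x (J w))"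

lemma red_x: assumes "\<And>x. x \<in> V \<Longrightarrow> P x" and "\<And>x y. y \<in> Z0 \<Longrightarrow> P (x - y) \<Longrightarrow> P x"
  shows "P x"
proof -
  obtain y where "y \<in> Z0" "x - y \<in> V" using decomp by blast
  then show ?thesis using assms by blast
qed

lemma U_iff: "in_u V J (jm z) \<longleftrightarrow> (\<forall>x w. AA z x w = 0)"
proof
  assume u: "in_u V J (jm z)"
  show "\<forall>x w. AA z x w = 0"
  proof (intro allI)
    fix x w
    show "AA z x w = 0"
    proof (rule red_x[of "\<lambda>x. AA z x w = 0"])
      fix x assume x: "x \<in> V"
      have "jm z (J x) = J (jm z x)" using u x unfolding in_u_def by auto
      then have "inner (jm z (J x)) w = inner (J (jm z x)) w" by simp
      then show "AA z x w = 0" unfolding AA_def jm_inner J_inner by simp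
    next
      fix x y assume "y \<in> Z0" "AA z (x - y) w = 0"
      then show "AA z x w = 0" unfolding AA_def using J_Z0[of y] by simp
    qed
  qed
next
  assume a: "\<forall>x w. AA z x w = 0"
  show "in_u V J (jm z)" unfolding in_u_def
  proof (intro conjI ballI)
    fix x show "jm z x \<in> V" by (rule jm_V)
  next
    fix x y
    show "inner (jm z x) y = - inner x (jm z y)"
      by (metis br_skew inner_commute inner_minus_right jm_inner)
  next
    fix x
    show "jm z (J x) = J (jm z x)"
    proof (rule vec_eqI)
      fix w
      show "inner (jm z (J x)) w = inner (J (jm z x)) w"
        using a[rule_format, of x w] unfolding AA_def jm_inner J_inner by simp
    qed
  qed
qed

lemma CC_J: "(\<forall>x w. CC (J z) x w = 0) \<longleftrightarrow> (\<forall>x w. CC z x w = 0)"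
proof -
  have e: "CC z (J x) w = CC (J z) x w" for x w
    unfolding CC_def by (simp add: inner_minus_left inner_minus_right)
  show ?thesis
  proof
    assume "\<forall>x w. CC (J z) x w = 0"
    then show "\<forall>x w. CC z x w = 0" using e[of "- J _"] by simp
  next
    assume "\<forall>x w. CC z x w = 0"
    then show "\<forall>x w. CC (J z) x w = 0" using e by simp
  qed
qed

lemma ii_iff: "in_u V J (\<lambda>x. jm (J z) x - (1/2) *\<^sub>R opcomm J (jm z) x) \<longleftrightarrow> (\<forall>x w. CC z x w = 0)"
  (is "in_u V J ?T \<longleftrightarrow> _")
proof -
  have Ti: "inner (?T x) w = inner (J z) (br x w) + (1/2) * inner z (br x (J w)) + (1/2) * inner z (br (J x) w)" for x w
    unfolding opcomm_def by (simp add: inner_diff_left inner_add_left inner_scaleR_left jm_inner J_inner[of "jm z x" w] field_simps)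
  have TV: "\<forall>x\<in>V. ?T x \<in> V"
    unfolding opcomm_def using jm_V J_V subV by (simp add: subspace_diff subspace_scale)
  have sk: "\<forall>x\<in>V. \<forall>y\<in>V. inner (?T x) y = - inner x (?T y)"
  proof (intro ballI)
    fix x y
    have "inner x (?T y) = inner (?T y) x" by (simp add: inner_commute)
    then show "inner (?T x) y = - inner x (?T y)" unfolding Ti
      using br_skew[of y x] br_skew[of y "J x"] br_skew[of "J y" x]
      by (simp add: algebra_simps)
  qed
  have key: "inner (?T (J x)) w - inner (J (?T x)) w = - CC z x w" for x w
    unfolding J_inner[of "?T x" w] Ti CC_def by (simp add: field_simps)
  show ?thesis
  proof
    assume "in_u V J ?T"
    then have c: "\<forall>x\<in>V. ?T (J x) = J (?T x)" unfolding in_u_def by auto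
    show "\<forall>x w. CC z x w = 0"
    proof (intro allI)
      fix x w
      show "CC z x w = 0"
      proof (rule red_x[of "\<lambda>x. CC z x w = 0"])
        fix x assume "x \<in> V" then show "CC z x w = 0" using c key[of x w] by simp
      next
        fix x y assume "y \<in> Z0" "CC z (x - y) w = 0"
        then show "CC z x w = 0" unfolding CC_def using J_Z0[of y] by simp
      qed
    qed
  next
    assume a: "\<forall>x w. CC z x w = 0"
    show "in_u V J ?T" unfolding in_u_def
    proof (intro conjI TV sk ballI)
      fix x show "?T (J x) = J (?T x)"
        by (rule vec_eqI) (use key a in auto)
    qed
  qed
qed

lemma iii_iff: "(\<forall>x \<in> V. minus_part J (jm (J z)) x = (1/2) *\<^sub>R opcomm J (jm z) x) \<longleftrightarrow> (\<forall>x w. CC (J z) x w = 0)"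
proof -
  have key: "inner (minus_part J (jm (J z)) x) w - inner ((1/2) *\<^sub>R opcomm J (jm z) x) w = (1/2) * CC (J z) x w" for x w
    unfolding minus_part_def opcomm_def CC_def
    apply (simp only: inner_diff_left inner_add_left inner_scaleR_left jm_inner J_inner[of "jm (J z) (J x)" w] J_inner[of "jm z x" w] JJ' inner_minus_left jm_inner)
    apply (simp add: algebra_simps)
    done
  show ?thesis
  proof
    assume c: "\<forall>x \<in> V. minus_part J (jm (J z)) x = (1/2) *\<^sub>R opcomm J (jm z) x"
    show "\<forall>x w. CC (J z) x w = 0"
    proof (intro allI)
      fix x w
      show "CC (J z) x w = 0"
      proof (rule red_x[of "\<lambda>x. CC (J z) x w = 0"])
        fix x assume "x \<in> V" then show "CC (J z) x w = 0" using c key[of x w] by simp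
      next
        fix x y assume "y \<in> Z0" "CC (J z) (x - y) w = 0"
        then show "CC (J z) x w = 0" unfolding CC_def using J_Z0[of y] by simp
      qed
    qed
  next
    assume a: "\<forall>x w. CC (J z) x w = 0"
    show "\<forall>x \<in> V. minus_part J (jm (J z)) x = (1/2) *\<^sub>R opcomm J (jm z) x"
    proof
      fix x assume "x \<in> V"
      show "minus_part J (jm (J z)) x = (1/2) *\<^sub>R opcomm J (jm z) x"
        by (rule vec_eqI) (use key a in auto)
    qed
  qed
qed

lemma integ_iff: "integrable br J \<longleftrightarrow> (\<forall>z\<in>Z0. \<forall>x w. CC z x w = 0)"
proof -
  define N where "N x w = br x w + J (br (J x) w + br x (J w)) - br (J x) (J w)" for x w
  have NZ: "N x w \<in> Z0" for x w
  proof -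
    have "N x w = (br x w - br (J x) (J w)) + J (br (J x) w + br x (J w))"
      unfolding N_def by (simp add: algebra_simps)
    moreover have "br x w - br (J x) (J w) \<in> D" "br (J x) w + br x (J w) \<in> D"
      using brD subD by (auto intro: subspace_diff subspace_add)
    ultimately show ?thesis unfolding zz0_def by blast
  qed
  have NC: "inner z (N x w) = CC z x w" for z x w
    unfolding N_def CC_def using J_inner[of z "br (J x) w + br x (J w)"]
    by (simp add: inner_add_right inner_diff_right)
  have I: "integrable br J \<longleftrightarrow> (\<forall>x w. N x w = 0)" unfolding integrable_def N_def by simp
  show ?thesis unfolding I
  proof
    assume "\<forall>x w. N x w = 0" then show "\<forall>z\<in>Z0. \<forall>x w. CC z x w = 0" using NC by (metis inner_zero_right)
  next
    assume a: "\<forall>z\<in>Z0. \<forall>x w. CC z x w = 0"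
    show "\<forall>x w. N x w = 0"
    proof (intro allI)
      fix x w have "inner (N x w) (N x w) = 0" using a NZ NC by metis
      then show "N x w = 0" by simp
    qed
  qed
qed


lemma AA_add: "AA (a + c) x w = AA a x w + AA c x w" unfolding AA_def by (simp add: inner_add_left)
lemma AA_diff: "AA (a - c) x w = AA a x w - AA c x w" unfolding AA_def by (simp add: inner_diff_left)
lemma AA_negx: "AA z (- x) w = - AA z x w" unfolding AA_def by simp
lemma CC_add: "CC (a + c) x w = CC a x w + CC c x w" unfolding CC_def by (simp add: inner_add_left)
lemma CC_AA: "CC z x w = - AA z (J x) w - AA (J z) x w" unfolding CC_def AA_def by simp

lemma perpD_AA: assumes "\<forall>d\<in>D. inner r d = 0" shows "AA r x w = 0"
  unfolding AA_def using assms brD by simp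

definition P where "P z = prj D (J z)"
lemma P_D: "P z \<in> D" unfolding P_def using prj(1)[OF subD] .
lemma P_perp: "d \<in> D \<Longrightarrow> inner (J z - P z) d = 0" unfolding P_def using prj(2)[OF subD] .
lemma P_lin: "linear P"
proof -
  have "linear (prj D \<circ> J)" using prj_linear[OF subD] linJ linear_compose by blast
  then show ?thesis unfolding P_def[abs_def] by (simp add: o_def)
qed
lemma AA_P: "AA (J z) x w = AA (P z) x w"
proof -
  have "AA (J z - P z) x w = 0" by (rule perpD_AA) (use P_perp in auto)
  then show ?thesis by (simp add: AA_diff)
qed

lemma NJ_D: "NJ \<subseteq> D" unfolding nJ_def by auto
lemma NJ_J: "y \<in> NJ \<Longrightarrow> J y \<in> NJ"
proof -
  assume y: "y \<in> NJ"
  then obtain y' where "y' \<in> D" "y = J y'" "y \<in> D" unfolding nJ_def by auto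
  then have "J y = - y'" by simp
  moreover have "J y \<in> J ` D" using \<open>y \<in> D\<close> by (rule imageI)
  ultimately show "J y \<in> NJ" using \<open>y' \<in> D\<close> \<open>y \<in> D\<close> subspace_neg[OF subD] unfolding nJ_def by auto
qed
lemma subNJ: "subspace NJ"
  unfolding nJ_def by (rule subspace_inter[OF subD linear_subspace_image[OF linJ subD]])
lemma Z1_D: "Z1 \<subseteq> D" unfolding zz1_def by auto
lemma subZ1: "subspace Z1"
  unfolding subspace_def zz1_def using subD
  by (auto simp: subspace_0 subspace_add subspace_scale inner_add_left)

lemma P_Z1: assumes "z \<in> Z1" shows "P z \<in> Z1"
proof -
  have "inner (P z) y = 0" if y: "y \<in> NJ" for y
  proof -
    have "inner (J z - P z) y = 0" using P_perp y NJ_D by auto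
    then have "inner (P z) y = inner (J z) y" by (simp add: inner_diff_left)
    also have "\<dots> = - inner z (J y)" by (rule J_inner)
    also have "inner z (J y) = 0" using assms NJ_J[OF y] unfolding zz1_def by auto
    finally show ?thesis by simp
  qed
  then show ?thesis unfolding zz1_def using P_D by auto
qed

lemma backward:
  assumes U: "\<forall>z\<in>Z1. \<forall>x w. AA z x w = 0" and Cb: "\<forall>z\<in>b. \<forall>x w. CC z x w = 0"
  shows "\<forall>z\<in>Z0. \<forall>x w. CC z x w = 0"
proof -
  define K where "K = {z. \<forall>x w. CC z x w = 0}"
  have Kadd: "a \<in> K \<Longrightarrow> c \<in> K \<Longrightarrow> a + c \<in> K" for a c unfolding K_def by (simp add: CC_add)
  have KJ: "a \<in> K \<Longrightarrow> J a \<in> K" for a unfolding K_def using CC_J by blast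
  have Z1K: "z \<in> K" if "z \<in> Z1" for z
    unfolding K_def using U that P_Z1[OF that] by (simp add: CC_AA AA_P)
  have NJK: "z \<in> K" if zN: "z \<in> NJ" for z
  proof -
    obtain u v where "z = u + J v" "u \<in> b" "v \<in> b" using zN nJeq by auto
    then show ?thesis using Cb Kadd KJ unfolding K_def by auto
  qed
  have DK: "d \<in> K" if d: "d \<in> D" for d
  proof -
    define q where "q = prj NJ d"
    have q: "q \<in> NJ" "\<And>y. y \<in> NJ \<Longrightarrow> inner (d - q) y = 0" unfolding q_def using prj[OF subNJ] by auto
    have "d - q \<in> Z1" unfolding zz1_def using q d NJ_D subspace_diff[OF subD] by auto
    then have "(d - q) + q \<in> K" using Kadd Z1K NJK q(1) by blast
    then show ?thesis by simp
  qed
  show ?thesis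
  proof
    fix z assume "z \<in> Z0"
    then obtain a c where "z = a + J c" "a \<in> D" "c \<in> D" unfolding zz0_def by auto
    then have "z \<in> K" using DK KJ Kadd by auto
    then show "\<forall>x w. CC z x w = 0" unfolding K_def by auto
  qed
qed

definition Q where "Q z = z + P (P z)"
lemma Q_lin: "linear Q"
proof -
  show ?thesis unfolding Q_def[abs_def]
    by (rule linearI) (simp_all add: linear_add[OF P_lin] linear_scale[OF P_lin] scaleR_add_right)
qed

lemma Q_inj0: assumes z: "z \<in> Z1" and q: "Q z = 0" shows "z = 0"
proof -
  define p where "p = P z"
  define r where "r = J z - p"
  have zD: "z \<in> D" using z Z1_D by auto
  have pD: "p \<in> D" unfolding p_def by (rule P_D)
  have rp: "\<forall>d\<in>D. inner r d = 0" unfolding r_def p_def using P_perp by auto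
  have "inner (J p - P p) z = 0" using P_perp zD by auto
  then have e1: "inner (P p) z = inner (J p) z" by (simp add: inner_diff_left)
  have e2: "inner (J p) z = - inner p (J z)" by (rule J_inner)
  have Jz: "J z = p + r" unfolding r_def by simp
  have "inner p r = 0" using rp pD by (simp add: inner_commute)
  then have e3: "inner p (J z) = inner p p" unfolding Jz by (simp add: inner_add_right)
  have "z = - P p" using q unfolding Q_def p_def by (simp add: add_eq_0_iff)
  then have "inner z z = - inner (P p) z" by (metis inner_minus_left)
  then have zz: "inner z z = inner p p" using e1 e2 e3 by simp
  have "inner (J z) (J z) = inner p p + inner r r"
    unfolding Jz using \<open>inner p r = 0\<close> by (simp add: inner_add_left inner_add_right inner_commute)
  then have "inner r r = 0" using zz by simp
  then have "r = 0" by simp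
  then have "J z \<in> D" using Jz pD by simp
  then have "- J z \<in> D" using subspace_neg[OF subD] by blast
  moreover have "z = J (- J z)" by simp
  ultimately have "z \<in> NJ" using zD unfolding nJ_def by blast
  then have "inner z z = 0" using z unfolding zz1_def by auto
  then show ?thesis by simp
qed

lemma Q_surj: assumes "z \<in> Z1" shows "\<exists>y\<in>Z1. z = Q y"
proof -
  have QZ: "Q ` Z1 \<subseteq> Z1" unfolding Q_def using P_Z1 subspace_add[OF subZ1] by auto
  have sZ: "span Z1 = Z1" using subZ1 span_eq_iff by blast
  have inj: "inj_on Q (span Z1)" unfolding sZ using linear_inj_on_iff_eq_0[OF Q_lin subZ1] Q_inj0
    by blast
  have "dim (Q ` Z1) = dim Z1" by (rule dim_image_eq[OF Q_lin inj])
  then have "span (Q ` Z1) = span Z1" using dim_eq_span[OF QZ] by simp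
  moreover have "subspace (Q ` Z1)" by (rule linear_subspace_image[OF Q_lin subZ1])
  ultimately have "Q ` Z1 = Z1" using subZ1 by (metis span_eq_iff)
  then show ?thesis using assms by auto
qed

lemma forward:
  assumes C: "\<forall>z\<in>Z0. \<forall>x w. CC z x w = 0"
  shows "\<forall>z\<in>Z1. \<forall>x w. AA z x w = 0"
proof -
  have E1: "AA z (J x) w = - AA (P z) x w" if "z \<in> Z1" for z x w
  proof -
    have "z \<in> Z0" using that Z1_D D_Z0 by auto
    then have "CC z x w = 0" using C by auto
    then show ?thesis by (simp add: CC_AA AA_P)
  qed
  have E2: "AA (Q z) x w = 0" if z: "z \<in> Z1" for z x w
  proof -
    have "AA z x w = AA z (J (- J x)) w" by simp
    also have "\<dots> = - AA (P z) (- J x) w" using E1[OF z] by blast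
    also have "\<dots> = AA (P z) (J x) w" by (simp add: AA_negx)
    also have "\<dots> = - AA (P (P z)) x w" using E1[OF P_Z1[OF z]] by blast
    finally show ?thesis unfolding Q_def by (simp add: AA_add)
  qed
  show ?thesis using Q_surj E2 by blast
qed

end
theorem mainTheorem12:
  fixes br :: "'a::euclidean_space \<Rightarrow> 'a \<Rightarrow> 'a" and J :: "'a \<Rightarrow> 'a" and b :: "'a set"
  assumes "two_step_nilpotent br"
    and "linear J" and "\<forall>x. J (J x) = - x"
    and "J ` derived br \<subseteq> center br"
    and "\<forall>x y. inner (J x) (J y) = inner x y"
    and "subspace b" and "b \<subseteq> nJ br J"
    and "nJ br J = {u + J w | u w. u \<in> b \<and> w \<in> b}"
    and "\<forall>u\<in>b. \<forall>w\<in>b. inner u (J w) = 0"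
  shows "(integrable br J \<longleftrightarrow>
            (\<forall>z \<in> zz1 br J. in_u (vv br J) J (jmap br J z)) \<and>
            (\<forall>z \<in> b. in_u (vv br J) J
                (\<lambda>x. jmap br J (J z) x - (1/2) *\<^sub>R opcomm J (jmap br J z) x)))
       \<and> (integrable br J \<longleftrightarrow>
            (\<forall>z \<in> zz1 br J. in_u (vv br J) J (jmap br J z)) \<and>
            (\<forall>z \<in> b. \<forall>x \<in> vv br J.
                minus_part J (jmap br J (J z)) x = (1/2) *\<^sub>R opcomm J (jmap br J z) x))"
proof -
  interpret nilctx br J b unfolding nilctx_def using assms by blast
  have bZ0: "z \<in> b \<Longrightarrow> z \<in> zz0 br J" for z using bsub NJ_D D_Z0 by blast
  have M: "integrable br J \<longleftrightarrow> (\<forall>z\<in>zz1 br J. \<forall>x w. AA z x w = 0) \<and> (\<forall>z\<in>b. \<forall>x w. CC z x w = 0)"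
    unfolding integ_iff using forward backward bZ0 by blast
  show ?thesis unfolding M U_iff ii_iff iii_iff CC_J by blast
qed

end
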